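(* Let $p$ be an odd prime, let $G$ be a proper multiplicative subgroup of $\mathbb{F}_p^*$ with $|G|\ge 3$, and let $\xi,\mu\in\mathbb{F}_p^*$. Then: (1) for every $A\subseteq\mathbb{F}_p^*$, we have $A/A\neq (\xi G+\mu)\setminus\{0\}$; (2) for every $A\subseteq\mathbb{F}_p^*$, we have $A/A\neq \big((\xi G\cup\{0\})+\mu\big)\setminus\{0\}$.
   Context: $\mathbb{F}_p$ is the field with $p$ elements and $\mathbb{F}_p^*=\mathbb{F}_p\setminus\{0\}$. For $A\subseteq\mathbb{F}_p^*$, the ratio set is $A/A=\{a/b: a,b\in A\}$. For a set $S\subseteq\mathbb{F}_p$, $\xi S=\{\xi s: s\in S\}$ and $S+\mu=\{s+\mu: s\in S\}$. *)

theory Defs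
  imports "HOL-Computational_Algebra.Primes"
begin

definition ratio_set :: "'a::field set \<Rightarrow> 'a set" where
  "ratio_set A = {a / b | a b. a \<in> A \<and> b \<in> A}"

definition mult_subgroup :: "'a::field set \<Rightarrow> bool" where
  "mult_subgroup G \<longleftrightarrow> G \<subseteq> UNIV - {0} \<and> 1 \<in> G \<and>
     (\<forall>x\<in>G. \<forall>y\<in>G. x * y \<in> G) \<and> (\<forall>x\<in>G. inverse x \<in> G)"

end

theory Submission
  imports Defs "HOL-Computational_Algebra.Polynomial" "HOL-Number_Theory.Residues"
begin


lemma sum_rev_pow:
  fixes x :: "'a::field"
  assumes "x \<noteq> 0"
  shows "(\<Sum>k\<le>d. a (d-k) * x^k) = x^d * (\<Sum>j\<le>d. a j * inverse x ^ j)"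
proof -
  have "(\<Sum>k\<le>d. a (d-k) * x^k) = (\<Sum>j\<le>d. a j * x^(d-j))"
    by (rule sum.reindex_bij_witness[where i="\<lambda>j. d-j" and j="\<lambda>k. d-k"]) auto
  also have "\<dots> = (\<Sum>j\<le>d. x^d * (a j * inverse x ^ j))"
  proof (rule sum.cong)
    fix j assume "j \<in> {..d}"
    then have "x^d = x^(d-j) * x^j" by (simp add: power_add[symmetric])
    then show "a j * x^(d-j) = x^d * (a j * inverse x ^ j)"
      using assms by (simp add: power_inverse field_simps)
  qed simp
  finally show ?thesis by (simp add: sum_distrib_left)
qed

lemma core:
  fixes a :: "nat \<Rightarrow> 'a::field" and R :: "'a set"
  assumes fin: "finite R" and cR: "card R = d" and z: "0 \<notin> R"
    and inv: "\<forall>x\<in>R. inverse x \<in> R"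
    and root: "\<forall>x\<in>R. (\<Sum>k\<le>d. a k * x^k) = 0"
  shows "\<forall>k\<le>d. a (d-k) * a d = a 0 * a k"
proof -
  define Q where "Q = (\<Sum>k\<le>d. Polynomial.monom (a (d-k) * a d - a 0 * a k) k)"
  have cQ: "Polynomial.coeff Q i = (if i \<le> d then a (d-i) * a d - a 0 * a i else 0)" for i
    unfolding Q_def coeff_sum by (simp add: sum.delta)
  have pQ: "poly Q x = a d * (\<Sum>k\<le>d. a (d-k) * x^k) - a 0 * (\<Sum>k\<le>d. a k * x^k)" for x
    unfolding Q_def by (simp add: poly_sum poly_monom sum_distrib_left sum_subtractf algebra_simps)
  have "Q = 0"
  proof (rule ccontr)
    assume Q0: "Q \<noteq> 0"
    have "degree Q \<le> d" by (rule degree_le) (simp add: cQ)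
    moreover have "degree Q \<noteq> d"
    proof
      assume "degree Q = d"
      then have "Polynomial.coeff Q (degree Q) = 0" by (simp add: cQ)
      with Q0 show False by simp
    qed
    ultimately have dl: "degree Q < d" by simp
    have "R \<subseteq> {x. poly Q x = 0}"
    proof
      fix x assume xR: "x \<in> R"
      have "x \<noteq> 0" using xR z by auto
      then have "(\<Sum>k\<le>d. a (d-k) * x^k) = x^d * (\<Sum>j\<le>d. a j * inverse x ^ j)"
        by (rule sum_rev_pow)
      also have "\<dots> = 0" using root inv xR by simp
      finally show "x \<in> {x. poly Q x = 0}" using root xR by (simp add: pQ)
    qed
    then have "card R \<le> card {x. poly Q x = 0}"
      by (rule card_mono[OF poly_roots_finite[OF Q0]])
    also have "\<dots> \<le> degree Q" by (rule card_poly_roots_bound[OF Q0])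
    finally show False using dl cR by simp
  qed
  then show ?thesis using cQ by (metis coeff_0 eq_iff_diff_eq_0 mult.commute)
qed



lemma expand_gen:
  fixes x \<mu> u v :: "'a::field"
  assumes "m \<ge> 1"
  shows "(\<Sum>k\<le>m. (of_nat (m choose k) * (-\<mu>)^(m-k) - (if k=0 then u else 0) - (if k=1 then v else 0)) * x^k)
         = (x-\<mu>)^m - u - v*x"
proof -
  have "(x-\<mu>)^m = (\<Sum>k\<le>m. of_nat (m choose k) * x^k * (-\<mu>)^(m-k))"
    using binomial_ring[of x "-\<mu>" m] by simp
  moreover have "(\<Sum>k\<le>m. (if k=0 then u else 0) * x^k) = (\<Sum>k\<le>m. if k=0 then u * x^k else 0)"
    by (rule sum.cong) auto
  moreover have "(\<Sum>k\<le>m. (if k=1 then v else 0) * x^k) = (\<Sum>k\<le>m. if k=1 then v * x^k else 0)"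
    by (rule sum.cong) auto
  moreover have "(\<Sum>k\<le>m. if k=0 then u * x^k else 0) = u" by (simp add: sum.delta)
  moreover have "(\<Sum>k\<le>m. if k=1 then v * x^k else 0) = v * x" using assms by (simp add: sum.delta)
  ultimately show ?thesis
    by (simp add: algebra_simps sum_subtractf sum.distrib)
qed

lemma shift_sum:
  fixes b :: "nat \<Rightarrow> 'a::field"
  shows "(\<Sum>k\<le>m. b (k+1) * x^k) * x = (\<Sum>k\<le>Suc m. b k * x^k) - b 0"
proof -
  have "(\<Sum>k\<le>Suc m. b k * x^k) = b 0 * x^0 + (\<Sum>k\<le>m. b (Suc k) * x^(Suc k))"
    by (rule sum.atMost_Suc_shift)
  moreover have "(\<Sum>k\<le>m. b (Suc k) * x^(Suc k)) = (\<Sum>k\<le>m. b (k+1) * x^k) * x"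
    by (simp add: sum_distrib_left sum_distrib_right mult_ac)
  ultimately show ?thesis by simp
qed

lemma choose2: "of_nat (m choose 2) * 2 = (of_nat m * (of_nat m - 1) :: 'a::field)"
proof (induction m)
  case (Suc m)
  have "Suc m choose 2 = m + (m choose 2)" by (simp add: numeral_2_eq_2)
  then show ?case using Suc by (simp add: algebra_simps)
qed (simp add: numeral_2_eq_2)

lemma choose3: "of_nat (m choose 3) * 6 = (of_nat m * (of_nat m - 1) * (of_nat m - 2) :: 'a::field)"
proof (induction m)
  case (Suc m)
  have "Suc m choose 3 = (m choose 2) + (m choose 3)" by (simp add: numeral_3_eq_3 numeral_2_eq_2)
  then have "of_nat (Suc m choose 3) * 6 = of_nat (m choose 2) * 2 * 3 + of_nat (m choose 3) * (6::'a)"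
    by (simp add: algebra_simps)
  also have "\<dots> = (of_nat m * (of_nat m - 1)) * 3 + of_nat m * (of_nat m - 1) * (of_nat m - 2)"
    using Suc choose2[of m, where 'a='a] by simp
  finally show ?case by (simp add: algebra_simps)
qed (simp add: numeral_3_eq_3)

lemma choose_nz:
  assumes "prime p" "m < p" "j \<le> m"
  shows "\<not> p dvd (m choose j)"
proof
  assume "p dvd (m choose j)"
  then have "p dvd fact j * fact (m-j) * (m choose j)" by simp
  then have "p dvd fact m" using binomial_fact_lemma[OF assms(3)] by simp
  then show False using assms prime_dvd_fact_iff by auto
qed

lemma char_p:
  assumes "prime p" "card (UNIV :: 'a::{finite,field} set) = p"
  shows "of_nat k = (0::'a) \<longleftrightarrow> p dvd k"
proof -
  have "CHAR('a) dvd p" using CHAR_dvd_CARD[where 'a='a] assms by simp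
  moreover have "CHAR('a) \<noteq> Suc 0" by (rule CHAR_not_1)
  ultimately have "CHAR('a) = p" using assms(1) unfolding prime_nat_iff by auto
  then show ?thesis by (simp add: of_nat_eq_0_iff_char_dvd)
qed



definition bc :: "nat \<Rightarrow> 'a::field \<Rightarrow> 'a \<Rightarrow> 'a \<Rightarrow> nat \<Rightarrow> 'a" where
  "bc m \<mu> u v k = of_nat (m choose k) * (-\<mu>)^(m-k) - (if k=0 then u else 0) - (if k=1 then v else 0)"

lemma bc_sum: "m \<ge> 1 \<Longrightarrow> (\<Sum>k\<le>m. bc m \<mu> u v k * x^k) = (x-\<mu>)^m - u - v*x"
  unfolding bc_def by (rule expand_gen)

lemma alg1a:
  fixes w c e :: "'a::field"
  assumes "w \<noteq> 0" "1 = c*c" "w = c*w^(j+2)" "w^2 = c*w^(j+1)" "c = w^(j+3) - e"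
  shows "e = 0"
proof -
  have "w * w^2 = w * (c*w^(j+1))" using assms(4) by simp
  also have "\<dots> = c*w^(j+2)" by (simp add: power_Suc mult_ac)
  finally have "w * w^2 = w * 1" using assms(3) by (metis mult.right_neutral)
  then have w2: "w^2 = 1" using assms(1) by (metis mult_left_cancel)
  then have c1: "c * w^(j+1) = 1" using assms(4) by simp
  have "c * w^(j+3) = (c * w^(j+1)) * w^2" by (simp add: power_add mult_ac numeral_3_eq_3 power2_eq_square)
  then have "c * w^(j+3) = 1" using c1 w2 by (metis mult.left_neutral)
  then have "c * (c * w^(j+3)) = c" by simp
  then have "w^(j+3) = c" using assms(2) by (metis mult.assoc mult_1)
  then show ?thesis using assms(5) by simp
qed

lemma case1a:
  fixes \<mu> \<xi> :: "'a::field"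
  assumes fin: "finite S" and cS: "card S = n" and z: "0 \<notin> S" and inv: "\<forall>x\<in>S. inverse x \<in> S"
    and rt: "\<forall>x\<in>S. (x-\<mu>)^n = \<xi>^n" and xi: "\<xi> \<noteq> 0" and mu: "\<mu> \<noteq> 0" and n3: "n \<ge> 3"
    and nzn: "of_nat n \<noteq> (0::'a)" and nzc: "of_nat (n choose 2) \<noteq> (0::'a)"
  shows False
proof -
  define a where "a = bc n \<mu> (\<xi>^n) 0"
  have root: "\<forall>x\<in>S. (\<Sum>k\<le>n. a k * x^k) = 0"
    using rt n3 by (simp add: a_def bc_sum)
  have H: "\<forall>k\<le>n. a (n-k) * a n = a 0 * a k"
    by (rule core[OF fin cS z inv root])
  obtain j where j: "n = j+3" using n3 by (metis add.commute le_iff_add)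
  define w where "w = -\<mu>"
  define c where "c = a 0"
  have an: "a n = 1" using n3 by (simp add: a_def bc_def)
  have e0: "1 = c*c" using H[rule_format, of 0] an by (simp add: c_def)
  have "a (n-1) = c * a 1" using H[rule_format, of 1] an j by (simp add: c_def)
  moreover have "a (n-1) = of_nat n * w"
  proof -
    have "n choose (n-1) = n" using binomial_symmetric[of 1 n] n3 by simp
    then show ?thesis using j by (simp add: a_def bc_def w_def)
  qed
  moreover have "a 1 = of_nat n * w^(j+2)" using j by (simp add: a_def bc_def w_def)
  ultimately have "of_nat n * w = of_nat n * (c * w^(j+2))" by (simp add: mult_ac)
  then have e1: "w = c * w^(j+2)" using nzn by simp
  have "a (n-2) = c * a 2" using H[rule_format, of 2] an j by (simp add: c_def)
  moreover have "a (n-2) = of_nat (n choose 2) * w^2"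
  proof -
    have "n choose (n-2) = n choose 2" using n3 by (simp add: binomial_symmetric[symmetric])
    then show ?thesis using j by (simp add: a_def bc_def w_def)
  qed
  moreover have "a 2 = of_nat (n choose 2) * w^(j+1)" using j by (simp add: a_def bc_def w_def)
  ultimately have "of_nat (n choose 2) * w^2 = of_nat (n choose 2) * (c * w^(j+1))" by (simp add: mult_ac)
  then have e2: "w^2 = c * w^(j+1)" using nzc by simp
  have e3: "c = w^(j+3) - \<xi>^n" using j by (simp add: c_def a_def bc_def w_def)
  have "\<xi>^n = 0" using alg1a[OF _ e0 e1 e2 e3] mu by (simp add: w_def)
  then show False using xi by simp
qed

lemma alg1b:
  fixes N w Y C2 C3 c :: "'a::field"
  assumes w: "w \<noteq> 0" and N: "N \<noteq> 0" and N1: "N - 1 \<noteq> 0" and h2: "2*C2 = N*(N-1)" and h3: "6*C3 = N*(N-1)*(N-2)"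
   and hc: "c = N*Y*w^2" and e0: "1 = c*c"
   and e1: "N*w = c*(C2*(Y*w))" and e2: "C2*w^2 = c*(C3*Y)"
  shows "3*(N-1)^2 = 4*N*(N-2)"
proof -
  define Z where "Z = Y*Y"
  have "N * w = N * w * (Y*Y*w^2*C2)" using e1 hc by (simp add: algebra_simps power2_eq_square)
  then have e1': "1 = Z*w^2*C2" using w N unfolding Z_def by (metis mult_cancel_left1 mult_eq_0_iff)
  have "C2 * w^2 = (N*Z*C3) * w^2" using e2 hc unfolding Z_def by (simp add: algebra_simps power2_eq_square)
  then have e2': "C2 = N*Z*C3" using w by simp
  have e0': "1 = N^2*Z*w^4" using e0 hc unfolding Z_def by (simp add: algebra_simps power2_eq_square power4_eq_xxxx)
  have "2 = Z*w^2*(2*C2)" using e1' by (simp add: algebra_simps)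
  then have a: "2 = Z*w^2*N*(N-1)" using h2 by (metis mult.assoc)
  have "(N*(N-1))*3 = 3*(2*C2)" using h2 by simp
  also have "\<dots> = 6*C2" by simp
  also have "\<dots> = N*Z*(6*C3)" using e2' by simp
  also have "\<dots> = N*Z*(N*(N-1)*(N-2))" using h3 by simp
  also have "\<dots> = (N*(N-1))*(N*Z*(N-2))" by (simp add: mult_ac)
  finally have "(N*(N-1))*3 = (N*(N-1))*(N*Z*(N-2))" .
  then have b: "3 = N*Z*(N-2)" using N N1 by (metis mult_left_cancel mult_eq_0_iff)
  have "(4::'a) = 2*2" by simp
  also have "\<dots> = (Z*w^2*N*(N-1))*(Z*w^2*N*(N-1))" using a by simp
  also have "\<dots> = Z*(N-1)^2*(N^2*Z*w^4)" by (simp add: algebra_simps power2_eq_square power4_eq_xxxx)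
  finally have c: "4 = Z*(N-1)^2" using e0' by simp
  have "3*(N-1)^2 = (N*Z*(N-2))*(N-1)^2" using b by simp
  also have "\<dots> = N*(N-2)*(Z*(N-1)^2)" by (simp add: algebra_simps)
  also have "\<dots> = N*(N-2)*4" using c by simp
  finally show ?thesis by (simp add: mult_ac)
qed

lemma case1b:
  fixes \<mu> \<xi> :: "'a::field"
  assumes fin: "finite S" and cS: "card S = n - 1" and z: "0 \<notin> S" and inv: "\<forall>x\<in>S. inverse x \<in> S"
    and one: "1 \<in> S"
    and rt: "\<forall>x\<in>S. (x-\<mu>)^n = \<xi>^n" and hz: "\<xi>^n = (-\<mu>)^n" and mu: "\<mu> \<noteq> 0" and n3: "n \<ge> 3"
    and nz: "\<forall>k. 0 < k \<longrightarrow> k \<le> n+1 \<longrightarrow> of_nat k \<noteq> (0::'a)"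
    and nzc: "\<forall>m\<le>n+1. \<forall>i\<le>m. of_nat (m choose i) \<noteq> (0::'a)"
  shows False
proof -
  define b where "b = bc n \<mu> (\<xi>^n) 0"
  define a where "a = (\<lambda>k. b (k+1))"
  obtain j where j: "n = j+3" using n3 by (metis add.commute le_iff_add)
  define w where "w = -\<mu>"
  have w0: "w \<noteq> 0" using mu by (simp add: w_def)
  have b0: "b 0 = 0" using hz by (simp add: b_def bc_def)
  have root: "\<forall>x\<in>S. (\<Sum>k\<le>n-1. a k * x^k) = 0"
  proof
    fix x assume xS: "x \<in> S"
    have "(\<Sum>k\<le>n-1. a k * x^k) * x = (\<Sum>k\<le>Suc (n-1). b k * x^k) - b 0"
      unfolding a_def by (rule shift_sum)
    also have "Suc (n-1) = n" using n3 by simp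
    finally have "(\<Sum>k\<le>n-1. a k * x^k) * x = (x-\<mu>)^n - \<xi>^n"
      using n3 b0 by (simp add: b_def bc_sum)
    then have "(\<Sum>k\<le>n-1. a k * x^k) * x = 0" using rt xS by simp
    moreover have "x \<noteq> 0" using xS z by auto
    ultimately show "(\<Sum>k\<le>n-1. a k * x^k) = 0" by simp
  qed
  have H: "\<forall>k\<le>n-1. a (n-1-k) * a (n-1) = a 0 * a k"
    by (rule core[OF fin cS z inv root])
  define c where "c = a 0"
  define N where "N = (of_nat n :: 'a)"
  define C2 where "C2 = (of_nat (n choose 2) :: 'a)"
  define C3 where "C3 = (of_nat (n choose 3) :: 'a)"
  define Y where "Y = w^j"
  have an: "a (n-1) = 1" using n3 by (simp add: a_def b_def bc_def)
  have e0: "1 = c*c" using H[rule_format, of 0] an by (simp add: c_def)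
  have cc: "c = N*Y*w^2"
  proof -
    have "n choose 1 = n" by simp
    then show ?thesis using j by (simp add: c_def a_def b_def bc_def N_def Y_def w_def power_add mult_ac power2_eq_square)
  qed
  have "a (n-2) = c * a 1" using H[rule_format, of 1] an j by (simp add: c_def)
  moreover have "a (n-2) = N * w"
  proof -
    have "n choose (n-1) = n" using binomial_symmetric[of 1 n] n3 by simp
    then show ?thesis using j by (simp add: a_def b_def bc_def w_def N_def)
  qed
  moreover have "a 1 = C2 * (Y*w)"
  proof -
    have "n - 2 = Suc j" using j by simp
    moreover have "a 1 = b 2" unfolding a_def by (simp add: numeral_2_eq_2)
    ultimately show ?thesis by (simp add: b_def bc_def w_def C2_def Y_def mult_ac)
  qed
  ultimately have e1: "N*w = c*(C2*(Y*w))" by simp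
  have "a (n-3) = c * a 2" using H[rule_format, of 2] an j by (simp add: c_def)
  moreover have "a (n-3) = C2 * w^2"
  proof -
    have "n choose (n-2) = n choose 2" using n3 by (simp add: binomial_symmetric[symmetric])
    moreover have "n-3+1 = n-2" using n3 by simp
    then have "a (n-3) = b (n-2)" by (simp add: a_def)
    moreover have "n - (n-2) = 2" using n3 by simp
    moreover have "n - 2 \<noteq> 0" using n3 by simp
    ultimately show ?thesis by (simp add: b_def bc_def w_def C2_def)
  qed
  moreover have "a 2 = C3 * Y"
  proof -
    have "n - 3 = j" using j by simp
    then show ?thesis by (simp add: a_def b_def bc_def w_def C3_def Y_def)
  qed
  ultimately have e2: "C2*w^2 = c*(C3*Y)" by simp
  have N0: "N \<noteq> 0" using nz n3 by (simp add: N_def)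
  have N1: "N - 1 \<noteq> 0"
  proof -
    have "of_nat (n-1) \<noteq> (0::'a)" using nz[rule_format, of "n-1"] n3 by linarith
    moreover have "of_nat (n-1) = N - 1" using n3 by (simp add: N_def of_nat_diff)
    ultimately show ?thesis by simp
  qed
  have h2: "2*C2 = N*(N-1)" using choose2[of n, where 'a='a] by (simp add: C2_def N_def mult_ac)
  have h3: "6*C3 = N*(N-1)*(N-2)" using choose3[of n, where 'a='a] by (simp add: C3_def N_def mult_ac)
  have "3*(N-1)^2 = 4*N*(N-2)" by (rule alg1b[OF w0 N0 N1 h2 h3 cc e0 e1 e2])
  moreover have "(N-3)*(N+1) = 4*N*(N-2) - 3*(N-1)^2" by (simp add: algebra_simps power2_eq_square)
  ultimately have "(N-3)*(N+1) = 0" by simp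
  moreover have "N + 1 \<noteq> 0" using nz[rule_format, of "n+1"] by (simp add: N_def add.commute)
  ultimately have N3: "N = 3" by simp
  have n3': "n = 3"
  proof (rule ccontr)
    assume "n \<noteq> 3"
    then have "of_nat (n-3) \<noteq> (0::'a)" using nz[rule_format, of "n-3"] n3 by linarith
    moreover have "of_nat (n-3) = N - 3" using n3 by (simp add: N_def of_nat_diff)
    ultimately show False using N3 by simp
  qed
  then have "j = 0" using j by simp
  then have Y1: "Y = 1" by (simp add: Y_def)
  have C23: "C2 = 3" using n3' by (simp add: C2_def numeral_3_eq_3 numeral_2_eq_2)
  have "3*w = (3*w) * (3*w^2)" using e1 cc N3 Y1 C23 by (simp add: algebra_simps power2_eq_square)
  then have w2: "3*w^2 = 1" using w0 N0 N3 by (metis mult_cancel_left1 mult_eq_0_iff)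
  have "(1-\<mu>)^n = \<xi>^n" using rt one by simp
  then have "(1+w)^3 = w^3" using hz n3' by (simp add: w_def)
  then have "(1+w)^3 - w^3 = 0" by simp
  moreover have "(1+w)^3 - w^3 = 1 + 3*w + 3*w^2" by (simp add: algebra_simps power2_eq_square power3_eq_cube)
  ultimately have "1 + 3*w + 3*w^2 = 0" by simp
  then have "3*w + 2 = 0" using w2 by (simp add: algebra_simps)
  then have "3*w = -2" by (simp add: add_eq_0_iff2)
  then have "(3*w)*(3*w) = 4" by simp
  then have "3*(3*w^2) = 4" by (simp add: algebra_simps power2_eq_square)
  then have "(3::'a) = 4" using w2 by simp
  moreover have "(4::'a) - 3 = 1" by simp
  ultimately show False by simp
qed



lemma case2a:
  fixes \<mu> \<xi> :: "'a::field"
  assumes fin: "finite S" and cS: "card S = n + 1" and z: "0 \<notin> S" and inv: "\<forall>x\<in>S. inverse x \<in> S"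
    and one: "1 \<in> S"
    and rt: "\<forall>x\<in>S. (x-\<mu>)^(n+1) = \<xi>^n * (x-\<mu>)" and xi: "\<xi> \<noteq> 0" and mu: "\<mu> \<noteq> 0" and n3: "n \<ge> 3"
    and nz: "\<forall>k. 0 < k \<longrightarrow> k \<le> n+1 \<longrightarrow> of_nat k \<noteq> (0::'a)"
    and nzc: "\<forall>m\<le>n+1. \<forall>i\<le>m. of_nat (m choose i) \<noteq> (0::'a)"
  shows False
proof -
  define a where "a = bc (n+1) \<mu> (-(\<xi>^n*\<mu>)) (\<xi>^n)"
  define w where "w = -\<mu>"
  have w0: "w \<noteq> 0" using mu by (simp add: w_def)
  have root: "\<forall>x\<in>S. (\<Sum>k\<le>n+1. a k * x^k) = 0"
  proof
    fix x assume xS: "x \<in> S"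
    have "(\<Sum>k\<le>n+1. a k * x^k) = (x-\<mu>)^(n+1) - (-(\<xi>^n*\<mu>)) - \<xi>^n*x"
      unfolding a_def by (rule bc_sum) simp
    also have "\<dots> = (x-\<mu>)^(n+1) - \<xi>^n*(x-\<mu>)" by (simp add: algebra_simps)
    finally show "(\<Sum>k\<le>n+1. a k * x^k) = 0" using rt xS by simp
  qed
  have H: "\<forall>k\<le>n+1. a (n+1-k) * a (n+1) = a 0 * a k"
    by (rule core[OF fin cS z inv root])
  define c where "c = a 0"
  define N where "N = (of_nat n :: 'a)"
  have an: "a (n+1) = 1" using n3 by (simp add: a_def bc_def)
  have e0: "1 = c*c" using H[rule_format, of 0] an by (simp add: c_def)
  have c0: "c \<noteq> 0" using e0 by auto
  have cval: "c = w^(n+1) - \<xi>^n * w" by (simp add: c_def a_def bc_def w_def)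
  have "a n = c * a 1" using H[rule_format, of 1] an by (simp add: c_def)
  moreover have "a n = (N+1) * w"
  proof -
    have "Suc n choose n = Suc n" by simp
    then show ?thesis using n3 by (simp add: a_def bc_def w_def N_def)
  qed
  moreover have "a 1 = (N+1) * w^n - \<xi>^n" by (simp add: a_def bc_def w_def N_def)
  ultimately have e1: "(N+1)*w = c*((N+1) * w^n - \<xi>^n)" by simp
  define D2 where "D2 = (of_nat ((n+1) choose 2) :: 'a)"
  have D20: "D2 \<noteq> 0" using nzc n3 by (simp add: D2_def)
  have "a (n-1) = c * a 2" using H[rule_format, of 2] an n3 by (simp add: c_def numeral_2_eq_2)
  moreover have "a (n-1) = D2 * w^2"
  proof -
    have "(n+1) choose (n-1) = (n+1) choose 2" using binomial_symmetric[of 2 "n+1"] n3 by simp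
    moreover have "n + 1 - (n-1) = 2" using n3 by simp
    moreover have "n - 1 \<noteq> 0" "n - 1 \<noteq> 1" using n3 by auto
    ultimately show ?thesis by (simp add: a_def bc_def w_def D2_def)
  qed
  moreover have "a 2 = D2 * w^(n-1)" by (simp add: a_def bc_def w_def D2_def)
  ultimately have "D2 * w^2 = D2 * (c * w^(n-1))" by (metis mult.left_commute)
  then have e2: "w^2 = c * w^(n-1)" using D20 by simp
  show False
  proof (cases "n = 3")
    case False
    then have "n \<ge> 4" using n3 by simp
    then obtain j where j: "n = j + 4" by (metis add.commute le_iff_add)
    define D3 where "D3 = (of_nat ((n+1) choose 3) :: 'a)"
    have D30: "D3 \<noteq> 0" using nzc j by (simp add: D3_def)
    have "a (n-2) = c * a 3" using H[rule_format, of 3] an j by (simp add: c_def numeral_3_eq_3 numeral_2_eq_2)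
    moreover have "a (n-2) = D3 * w^3"
    proof -
      have "(n+1) choose (n-2) = (n+1) choose 3" using binomial_symmetric[of 3 "n+1"] j by simp
      moreover have "n + 1 - (n-2) = 3" using j by simp
      moreover have "n - 2 \<noteq> 0" "n - 2 \<noteq> 1" using j by auto
      ultimately show ?thesis by (simp add: a_def bc_def w_def D3_def)
    qed
    moreover have "a 3 = D3 * w^(n-2)" by (simp add: a_def bc_def w_def D3_def)
    ultimately have "D3 * w^3 = D3 * (c * w^(n-2))" by (metis mult.left_commute)
    then have e3: "w^3 = c * w^(j+2)" using D30 j by simp
    have e2': "w^2 = c * w^(j+3)" using e2 j by (simp add: add.commute)
    have p3: "w^(j+3) = w * w^(j+2)"
    proof -
      have "j+3 = Suc (j+2)" by simp
      then show ?thesis by (simp only: power_Suc)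
    qed
    have "w * w^3 = w * (c * w^(j+2))" using e3 by simp
    also have "\<dots> = c * w^(j+3)" using p3 by (simp add: mult_ac)
    finally have "w * w^3 = c * w^(j+3)" .
    then have "w * w^3 = w^2 * 1" using e2' by simp
    then have "w^2 * w^2 = w^2 * 1" by (simp add: power2_eq_square power3_eq_cube mult_ac)
    then have w2: "w^2 = 1" using w0 by (metis mult_left_cancel power_not_zero)
    then have cw: "c * w^(j+3) = 1" using e2' by simp
    have "w^n = w * w^(j+3)"
    proof -
      have "n = Suc (j+3)" using j by simp
      then show ?thesis by (simp only: power_Suc)
    qed
    then have "c * w^n = w * (c * w^(j+3))" by (simp add: mult_ac)
    then have "c * w^n = w" using cw by simp
    then have "(N+1)*w = (N+1)*w - c * \<xi>^n" using e1 by (simp add: algebra_simps)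
    then have "c * \<xi>^n = 0" by simp
    then show False using c0 xi by simp
  next
    case True
    then have c1: "c = 1" using e2 w0 by simp
    define e where "e = \<xi>^3"
    have e0': "e \<noteq> 0" using xi by (simp add: e_def)
    have N3: "N = 3" using True by (simp add: N_def)
    have E: "e = 4*w^3 - 4*w" using e1 c1 N3 True by (simp add: e_def algebra_simps)
    have "1 = w^4 - e*w" using cval c1 True by (simp add: e_def)
    then have Q: "3*w^4 - 4*w^2 + 1 = 0" using E by (simp add: algebra_simps power2_eq_square power3_eq_cube power4_eq_xxxx)
    have "(1+w)^4 = e*(1+w)" using rt one True by (simp add: e_def w_def)
    show False
    proof (cases "1 + w = 0")
      case True
      then have "w = -1" by (simp add: add_eq_0_iff)
      then have "e = 0" using E by simp
      then show False using e0' by simp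
    next
      case False
      have "(1+w)^4 = (1+w)^3 * (1+w)" by (simp add: power_Suc2[symmetric] del: power_Suc2)
      then have R: "(1+w)^3 = e" using \<open>(1+w)^4 = e*(1+w)\<close> False by (metis mult_right_cancel)
      have "(3*w^2 - 1)*(w^2 - 1) = 0" using Q by (simp add: algebra_simps power2_eq_square power4_eq_xxxx)
      then consider "w^2 = 1" | "3*w^2 = 1" by auto
      then show False
      proof cases
        case 1
        then have "e = 4*w*(w^2 - 1)" using E by (simp add: algebra_simps power2_eq_square power3_eq_cube)
        then show False using e0' 1 by simp
      next
        case 2
        have w3: "3*w^3 = w" using 2 by (metis mult.assoc mult.commute mult_1 power2_eq_square power3_eq_cube)
        have "3*(1+w)^3 = 3 + 9*w + 3*(3*w^2) + 3*w^3" by (simp add: algebra_simps power2_eq_square power3_eq_cube)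
        also have "\<dots> = 6 + 10*w" using 2 w3 by simp
        finally have L: "3*e = 6 + 10*w" using R by simp
        have "3*e = 4*(3*w^3) - 12*w" unfolding E by (simp add: algebra_simps)
        also have "\<dots> = -8*w" using w3 by simp
        finally have "6 + 10*w = -8*w" using L by simp
        then have "2*(3*(3*w + 1)) = 0" by (simp add: algebra_simps)
        moreover have "(2::'a) \<noteq> 0" using nz[rule_format, of 2] True by simp
        moreover have "(3::'a) \<noteq> 0" using nz[rule_format, of 3] True by simp
        ultimately have "3*w + 1 = 0" by (metis mult_eq_0_iff)
        then have "3*w = -1" by (simp add: add_eq_0_iff2)
        then have "(3*w)*(3*w) = 1" by simp
        then have "3*(3*w^2) = 1" by (simp add: algebra_simps power2_eq_square)
        then have "(3::'a) = 1" using 2 by simp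
        moreover have "(2::'a) \<noteq> 0" using nz[rule_format, of 2] True by simp
        moreover have "(3::'a) - 1 = 2" by simp
        ultimately show False by simp
      qed
    qed
  qed
qed

lemma alg2b:
  fixes N w Y D2 D3 c :: "'a::field"
  assumes w: "w \<noteq> 0" and N: "N \<noteq> 0" and N1: "N + 1 \<noteq> 0"
   and h2: "2*D2 = (N+1)*N" and h3: "6*D3 = (N+1)*N*(N-1)"
   and hc: "c = N*Y*w^3" and e0: "1 = c*c"
   and e1: "(N+1)*w = c*(D2*(Y*w^2))" and e2: "D2*w^2 = c*(D3*(Y*w))"
  shows "2*w^2 = 1 \<and> N = 4"
proof -
  define Z where "Z = Y*Y"
  have "((N+1)*w)*2 = (N*Z*w^4) * (2*D2) * w" using e1 hc unfolding Z_def by (simp add: algebra_simps power2_eq_square power3_eq_cube power4_eq_xxxx)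
  also have "\<dots> = ((N+1)*w) * (N^2*Z*w^4)" using h2 by (simp add: algebra_simps power2_eq_square)
  finally have a: "2 = N^2*Z*w^4" using w N1 by (metis mult_left_cancel mult_eq_0_iff)
  have "1 = N^2*Z*w^4*w^2" using e0 hc unfolding Z_def by (simp add: algebra_simps power2_eq_square power3_eq_cube power4_eq_xxxx)
  then have b: "2*w^2 = 1" using a by simp
  have "(N*(N+1))*(3*w^2) = 3*(2*D2)*w^2" using h2 by (simp add: algebra_simps)
  also have "\<dots> = 6*(D2*w^2)" by (simp add: algebra_simps)
  also have "\<dots> = 6*(N*Z*w^4*D3)"
  proof -
    have "D2*w^2 = N*Z*w^4*D3" using e2 hc unfolding Z_def by (simp add: algebra_simps power2_eq_square power3_eq_cube power4_eq_xxxx)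
    then show ?thesis by simp
  qed
  also have "\<dots> = N*Z*w^4*(6*D3)" by (simp only: mult_ac)
  also have "\<dots> = (N*(N+1))*(N*Z*w^4*(N-1))" by (simp only: h3) (simp add: algebra_simps)
  finally have "3*w^2 = N*Z*w^4*(N-1)" using N N1 by (metis mult_left_cancel mult_eq_0_iff)
  then have "N*(3*w^2) = N*(N*Z*w^4*(N-1))" by (simp only:)
  also have "\<dots> = (N^2*Z*w^4)*(N-1)" by (simp add: power2_eq_square mult_ac)
  finally have "N*(3*w^2) = (N^2*Z*w^4)*(N-1)" .
  then have "N*(3*w^2) = 2*(N-1)" using a by simp
  then have "(N*(3*w^2))*2 = 2*(N-1)*2" by simp
  then have "3*N*(2*w^2) = 4*(N-1)" by (simp add: algebra_simps)
  then have "3*N = 4*(N-1)" using b by simp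
  then have "N = 4" by (simp add: algebra_simps)
  with b show ?thesis by simp
qed

lemma case2b:
  fixes \<mu> \<xi> :: "'a::field"
  assumes fin: "finite S" and cS: "card S = n" and z: "0 \<notin> S" and inv: "\<forall>x\<in>S. inverse x \<in> S"
    and one: "1 \<in> S"
    and rt: "\<forall>x\<in>S. (x-\<mu>)^(n+1) = \<xi>^n * (x-\<mu>)" and hz: "\<xi>^n = (-\<mu>)^n"
    and mu: "\<mu> \<noteq> 0" and n3: "n \<ge> 3"
    and nz: "\<forall>k. 0 < k \<longrightarrow> k \<le> n+1 \<longrightarrow> of_nat k \<noteq> (0::'a)"
    and nzc: "\<forall>m\<le>n+1. \<forall>i\<le>m. of_nat (m choose i) \<noteq> (0::'a)"
  shows False
proof -
  define b where "b = bc (n+1) \<mu> (-(\<xi>^n*\<mu>)) (\<xi>^n)"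
  define a where "a = (\<lambda>k. b (k+1))"
  obtain j where j: "n = j+3" using n3 by (metis add.commute le_iff_add)
  define w where "w = -\<mu>"
  have w0: "w \<noteq> 0" using mu by (simp add: w_def)
  have b0: "b 0 = 0"
  proof -
    have "b 0 = w^(n+1) + \<xi>^n*\<mu>" by (simp add: b_def bc_def w_def)
    also have "\<dots> = w^n * w - w^n * w" using hz by (simp add: w_def)
    finally show ?thesis by simp
  qed
  have root: "\<forall>x\<in>S. (\<Sum>k\<le>n. a k * x^k) = 0"
  proof
    fix x assume xS: "x \<in> S"
    have S1: "(\<Sum>k\<le>n+1. b k * x^k) = (x-\<mu>)^(n+1) - (-(\<xi>^n*\<mu>)) - \<xi>^n*x"
      unfolding b_def by (rule bc_sum) simp
    have "(\<Sum>k\<le>n. a k * x^k) * x = (\<Sum>k\<le>n+1. b k * x^k) - b 0"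
      unfolding a_def by (rule shift_sum[where b=b and m=n and x=x, unfolded Suc_eq_plus1])
    also have "\<dots> = (x-\<mu>)^(n+1) - (-(\<xi>^n*\<mu>)) - \<xi>^n*x"
      using b0 S1 by simp
    also have "\<dots> = (x-\<mu>)^(n+1) - \<xi>^n*(x-\<mu>)" by (simp add: algebra_simps)
    finally have "(\<Sum>k\<le>n. a k * x^k) * x = 0" using rt xS by simp
    moreover have "x \<noteq> 0" using xS z by auto
    ultimately show "(\<Sum>k\<le>n. a k * x^k) = 0" by simp
  qed
  have H: "\<forall>k\<le>n. a (n-k) * a n = a 0 * a k"
    by (rule core[OF fin cS z inv root])
  define c where "c = a 0"
  define N where "N = (of_nat n :: 'a)"
  define D2 where "D2 = (of_nat ((n+1) choose 2) :: 'a)"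
  define D3 where "D3 = (of_nat ((n+1) choose 3) :: 'a)"
  define Y where "Y = w^j"
  have an: "a n = 1" using n3 by (simp add: a_def b_def bc_def del: binomial_Suc_Suc)
  have e0: "1 = c*c" using H[rule_format, of 0] an by (simp add: c_def)
  have cc: "c = N*Y*w^3"
  proof -
    have "c = (N+1)*w^n - \<xi>^n" using n3 by (simp add: c_def a_def b_def bc_def N_def w_def)
    also have "\<dots> = N*w^n" using hz by (simp add: w_def algebra_simps)
    also have "w^n = Y*w^3" using j by (simp add: Y_def power_add)
    finally show ?thesis by (simp add: mult_ac)
  qed
  have "a (n-1) = c * a 1" using H[rule_format, of 1] an j by (simp add: c_def)
  moreover have "a (n-1) = (N+1) * w"
  proof -
    have "n-1+1 = n" using n3 by simp
    then have "a (n-1) = b n" by (simp add: a_def)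
    moreover have "Suc n choose n = Suc n" by simp
    ultimately show ?thesis using n3 by (simp add: b_def bc_def w_def N_def)
  qed
  moreover have "a 1 = D2 * (Y*w^2)"
  proof -
    have "a 1 = b 2" unfolding a_def by (simp add: numeral_2_eq_2)
    moreover have "n + 1 - 2 = j + 2" using j by simp
    ultimately show ?thesis by (simp add: b_def bc_def w_def D2_def Y_def power_add mult_ac power2_eq_square)
  qed
  ultimately have e1: "(N+1)*w = c*(D2*(Y*w^2))" by simp
  have "a (n-2) = c * a 2" using H[rule_format, of 2] an j by (simp add: c_def)
  moreover have "a (n-2) = D2 * w^2"
  proof -
    have "n-2+1 = n-1" using n3 by simp
    then have "a (n-2) = b (n-1)" by (simp add: a_def)
    moreover have "(n+1) choose (n-1) = (n+1) choose 2" using binomial_symmetric[of 2 "n+1"] n3 by simp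
    moreover have "n + 1 - (n-1) = 2" using n3 by simp
    moreover have "n - 1 \<noteq> 0" "n - 1 \<noteq> 1" using n3 by auto
    ultimately show ?thesis by (simp add: b_def bc_def w_def D2_def)
  qed
  moreover have "a 2 = D3 * (Y*w)"
  proof -
    have "a 2 = b 3" unfolding a_def by (simp add: numeral_2_eq_2 numeral_3_eq_3)
    moreover have "n + 1 - 3 = Suc j" using j by simp
    ultimately show ?thesis by (simp add: b_def bc_def w_def D3_def Y_def mult_ac)
  qed
  ultimately have e2: "D2*w^2 = c*(D3*(Y*w))" by simp
  have N0: "N \<noteq> 0" using nz n3 by (simp add: N_def)
  have N1: "N + 1 \<noteq> 0" using nz[rule_format, of "n+1"] by (simp add: N_def add.commute)
  have h2: "2*D2 = (N+1)*N" using choose2[of "n+1", where 'a='a] by (simp add: D2_def N_def mult_ac)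
  have h3: "6*D3 = (N+1)*N*(N-1)" using choose3[of "n+1", where 'a='a] by (simp add: D3_def N_def mult_ac)
  have R: "2*w^2 = 1 \<and> N = 4" by (rule alg2b[OF w0 N0 N1 h2 h3 cc e0 e1 e2])
  then have w2: "2*w^2 = 1" and N4: "N = 4" by auto
  have n4: "n = 4"
  proof (rule ccontr)
    assume "n \<noteq> 4"
    then consider "n = 3" | "n > 4" using n3 by linarith
    then show False
    proof cases
      case 1
      then have "(3::'a) = 4" using N4 by (simp add: N_def)
      moreover have "(4::'a) - 3 = 1" by simp
      ultimately show False by simp
    next
      case 2
      then have "of_nat (n-4) \<noteq> (0::'a)" using nz[rule_format, of "n-4"] by linarith
      moreover have "of_nat (n-4) = N - 4" using 2 by (simp add: N_def of_nat_diff)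
      ultimately show False using N4 by simp
    qed
  qed
  have "(1-\<mu>)^(n+1) = \<xi>^n * (1-\<mu>)" using rt one by blast
  then have P: "(1+w)^5 = w^4 * (1+w)" using hz n4 by (simp add: w_def)
  have two: "(2::'a) \<noteq> 0" using nz[rule_format, of 2] n4 by simp
  show False
  proof (cases "1 + w = 0")
    case True
    then have "w = -1" by (simp add: add_eq_0_iff)
    then have "(2::'a) = 1" using w2 by simp
    moreover have "(2::'a) - 1 = 1" by simp
    ultimately show False by simp
  next
    case False
    have "(1+w)^5 = (1+w)^4 * (1+w)" by (simp add: power_Suc2[symmetric] del: power_Suc2)
    then have "(1+w)^4 = w^4" using P False by (metis mult_right_cancel)
    then have "(1+w)^4 - w^4 = 0" by simp
    moreover have "(1+w)^4 - w^4 = 1 + 4*w + 3*(2*w^2) + 2*w*(2*w^2)"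
      by (simp add: algebra_simps power2_eq_square power3_eq_cube power4_eq_xxxx)
    ultimately have "1 + 4*w + 3 + 2*w = 0" using w2 by simp
    then have "2*(3*w + 2) = 0" by (simp add: algebra_simps)
    then have "3*w + 2 = 0" using two by (metis mult_eq_0_iff)
    then have "3*w = -2" by (simp add: add_eq_0_iff2)
    then have "(3*w)*(3*w) = 4" by simp
    moreover have "9*(2*w^2) = 2*((3*w)*(3*w))" by (simp add: algebra_simps power2_eq_square)
    ultimately have "9*(2*w^2) = 8" by simp
    then have "(9::'a) = 8" using w2 by simp
    moreover have "(9::'a) - 8 = 1" by simp
    ultimately show False by simp
  qed
qed



lemma subgroup_pow:
  fixes G :: "'a::field set"
  assumes fin: "finite G" and sg: "mult_subgroup G" and g: "g \<in> G"
  shows "g ^ card G = 1"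
proof -
  have G0: "0 \<notin> G" using sg by (auto simp: mult_subgroup_def)
  have gG: "\<forall>x\<in>G. g * x \<in> G" using sg g by (auto simp: mult_subgroup_def)
  have g0: "g \<noteq> 0" using g G0 by auto
  have inj: "inj_on (\<lambda>x. g * x) G" using g0 by (auto simp: inj_on_def)
  have sub: "(\<lambda>x. g * x) ` G \<subseteq> G" using gG by auto
  have "card ((\<lambda>x. g * x) ` G) = card G" using card_image[OF inj] .
  then have img: "(\<lambda>x. g * x) ` G = G" using card_subset_eq[OF fin sub] by simp
  have "(\<Prod>x\<in>G. x) = (\<Prod>x\<in>(\<lambda>x. g * x) ` G. x)" using img by simp
  also have "\<dots> = (\<Prod>x\<in>G. g * x)" using prod.reindex[OF inj] by simp
  also have "\<dots> = g ^ card G * (\<Prod>x\<in>G. x)" by (simp add: prod.distrib)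
  finally have "1 * (\<Prod>x\<in>G. x) = g ^ card G * (\<Prod>x\<in>G. x)" by simp
  moreover have "(\<Prod>x\<in>G. x) \<noteq> 0" using G0 fin by (auto simp: prod_zero_iff)
  ultimately show ?thesis by (metis mult_right_cancel)
qed

lemma subgroup_card:
  fixes G :: "'a::{finite,field} set"
  assumes sg: "mult_subgroup G" and ne: "G \<noteq> UNIV - {0}"
  shows "2 * card G \<le> card (UNIV :: 'a set) - 1"
proof -
  have sub: "G \<subseteq> UNIV - {0}" using sg by (auto simp: mult_subgroup_def)
  then obtain y where y: "y \<noteq> 0" "y \<notin> G" using ne by blast
  have dis: "((\<lambda>x. y * x) ` G) \<inter> G = {}"
  proof (rule ccontr)
    assume "((\<lambda>x. y * x) ` G) \<inter> G \<noteq> {}"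
    then obtain g where g: "g \<in> G" "y * g \<in> G" by auto
    then have "y * g * inverse g \<in> G" using sg by (auto simp: mult_subgroup_def)
    moreover have "g \<noteq> 0" using g sub by auto
    moreover have "y * g * inverse g = y" using \<open>g \<noteq> 0\<close> by (simp add: mult.assoc)
    ultimately show False using y by simp
  qed
  have inj: "inj_on (\<lambda>x. y * x) G" using y by (auto simp: inj_on_def)
  have "(\<lambda>x. y * x) ` G \<union> G \<subseteq> UNIV - {0}" using sub y by auto
  then have "card ((\<lambda>x. y * x) ` G \<union> G) \<le> card (UNIV - {0::'a})" by (rule card_mono[rotated]) simp
  moreover have "card ((\<lambda>x. y * x) ` G \<union> G) = 2 * card G"
    using card_Un_disjoint[OF _ _ dis] card_image[OF inj] by simp
  moreover have "card (UNIV - {0::'a}) = card (UNIV :: 'a set) - 1" by (simp add: card_Diff_singleton)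
  ultimately show ?thesis by simp
qed

lemma ratio_props:
  fixes A :: "'a::{finite,field} set"
  assumes "A \<subseteq> UNIV - {0}" "A \<noteq> {}"
  shows "finite (ratio_set A) \<and> 0 \<notin> ratio_set A \<and> 1 \<in> ratio_set A \<and> (\<forall>x\<in>ratio_set A. inverse x \<in> ratio_set A)"
proof -
  obtain a where a: "a \<in> A" using assms by auto
  have "1 \<in> ratio_set A" unfolding ratio_set_def using a assms(1)
    by (auto intro!: exI[of _ a])
  moreover have "0 \<notin> ratio_set A" unfolding ratio_set_def using assms(1) by auto
  moreover have "\<forall>x\<in>ratio_set A. inverse x \<in> ratio_set A" unfolding ratio_set_def by fastforce
  ultimately show ?thesis by simp
qed

theorem theorem1p11:
  fixes G :: "'a::{finite,field} set" and p :: nat and \<xi> \<mu> :: 'a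
  assumes "prime p" and "odd p" and "card (UNIV :: 'a set) = p"
    and "mult_subgroup G" and "G \<noteq> UNIV - {0}" and "card G \<ge> 3"
    and "\<xi> \<noteq> 0" and "\<mu> \<noteq> 0"
  shows "(\<forall>A. A \<subseteq> UNIV - {0} \<longrightarrow>
            ratio_set A \<noteq> ((\<lambda>g. \<xi> * g + \<mu>) ` G) - {0})
       \<and> (\<forall>A. A \<subseteq> UNIV - {0} \<longrightarrow>
            ratio_set A \<noteq> ((\<lambda>g. g + \<mu>) ` (((\<lambda>g. \<xi> * g) ` G) \<union> {0})) - {0})"
proof -
  note pr = assms(1) and cardU = assms(3) and sg = assms(4) and ne = assms(5) and xi = assms(7) and mu = assms(8)
  define n where "n = card G"
  have n3: "n \<ge> 3" using assms(6) by (simp add: n_def)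
  have finG: "finite G" by simp
  have G0: "0 \<notin> G" using sg by (auto simp: mult_subgroup_def)
  have pw: "\<forall>g\<in>G. g^n = 1" using subgroup_pow[OF finG sg] by (simp add: n_def)
  have np: "2 * n \<le> p - 1" using subgroup_card[OF sg ne] cardU by (simp add: n_def)
  have char: "\<And>k. of_nat k = (0::'a) \<longleftrightarrow> p dvd k" using char_p[OF pr cardU] .
  have nz: "\<forall>k. 0 < k \<longrightarrow> k \<le> n+1 \<longrightarrow> of_nat k \<noteq> (0::'a)"
  proof (intro allI impI)
    fix k :: nat assume "0 < k" "k \<le> n+1"
    then have "\<not> p dvd k" using np n3 by (auto dest: dvd_imp_le)
    then show "of_nat k \<noteq> (0::'a)" using char by simp
  qed
  have nzc: "\<forall>m\<le>n+1. \<forall>i\<le>m. of_nat (m choose i) \<noteq> (0::'a)"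
  proof (intro allI impI)
    fix m i :: nat assume "m \<le> n+1" "i \<le> m"
    then have "\<not> p dvd (m choose i)" using choose_nz[OF pr] np n3 by simp
    then show "of_nat (m choose i) \<noteq> (0::'a)" using char by simp
  qed
  define T where "T = (\<lambda>g. \<xi> * g + \<mu>) ` G"
  have injT: "inj_on (\<lambda>g. \<xi> * g + \<mu>) G" using xi by (auto simp: inj_on_def)
  have cT: "card T = n" unfolding T_def n_def using card_image[OF injT] .
  have finT: "finite T" by simp
  have rtT: "\<forall>x\<in>T. (x-\<mu>)^n = \<xi>^n"
  proof
    fix x assume "x \<in> T"
    then obtain g where g: "g \<in> G" "x = \<xi> * g + \<mu>" by (auto simp: T_def)
    then show "(x-\<mu>)^n = \<xi>^n" using pw by (simp add: power_mult_distrib)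
  qed
  have hz: "0 \<in> T \<Longrightarrow> \<xi>^n = (-\<mu>)^n"
  proof -
    assume "0 \<in> T"
    then have "(0-\<mu>)^n = \<xi>^n" using rtT by blast
    then show ?thesis by simp
  qed
  have muT: "\<mu> \<notin> T" using xi G0 by (auto simp: T_def)
  have Tne: "T - {0} \<noteq> {}"
  proof
    assume "T - {0} = {}"
    then have "T \<subseteq> {0}" by auto
    then have "card T \<le> 1" using card_mono[of "{0}" T] by simp
    then show False using cT n3 by simp
  qed
  have part1: "\<forall>A. A \<subseteq> UNIV - {0} \<longrightarrow> ratio_set A \<noteq> T - {0}"
  proof (intro allI impI notI)
    fix A :: "'a set"
    assume A: "A \<subseteq> UNIV - {0}" and eq: "ratio_set A = T - {0}"
    have Ane: "A \<noteq> {}"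
    proof
      assume "A = {}"
      then have "ratio_set A = {}" by (simp add: ratio_set_def)
      then show False using eq Tne by simp
    qed
    note R = ratio_props[OF A Ane]
    show False
    proof (cases "0 \<in> T")
      case True
      have cS: "card (ratio_set A) = n - 1" using eq True cT by (simp add: card_Diff_singleton)
      show False
        by (rule case1b[of "ratio_set A" n \<mu> \<xi>])
           (use R cS eq rtT hz[OF True] mu n3 nz nzc in auto)
    next
      case False
      then have eq': "ratio_set A = T" using eq by auto
      show False
        by (rule case1a[of "ratio_set A" n \<mu> \<xi>])
           (use R eq' cT rtT xi mu n3 nz nzc in auto)
    qed
  qed
  have T2: "(\<lambda>g. g + \<mu>) ` (((\<lambda>g. \<xi> * g) ` G) \<union> {0}) = T \<union> {\<mu>}"
    unfolding T_def by auto
  have rt2: "\<forall>x\<in>T \<union> {\<mu>}. (x-\<mu>)^(n+1) = \<xi>^n * (x-\<mu>)"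
    using rtT by (auto simp: mult_ac)
  have part2: "\<forall>A. A \<subseteq> UNIV - {0} \<longrightarrow> ratio_set A \<noteq> (T \<union> {\<mu>}) - {0}"
  proof (intro allI impI notI)
    fix A :: "'a set"
    assume A: "A \<subseteq> UNIV - {0}" and eq: "ratio_set A = (T \<union> {\<mu>}) - {0}"
    have Ane: "A \<noteq> {}"
    proof
      assume "A = {}"
      then have "ratio_set A = {}" by (simp add: ratio_set_def)
      then show False using eq mu by auto
    qed
    note R = ratio_props[OF A Ane]
    have cTm: "card (T \<union> {\<mu>}) = n + 1" using muT cT by simp
    show False
    proof (cases "0 \<in> T")
      case True
      have cS: "card (ratio_set A) = n" using eq True cTm by (simp add: card_Diff_singleton)
      show False
        by (rule case2b[of "ratio_set A" n \<mu> \<xi>])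
           (use R cS eq rt2 hz[OF True] mu n3 nz nzc in auto)
    next
      case False
      then have eq': "ratio_set A = T \<union> {\<mu>}" using eq mu by auto
      show False
        by (rule case2a[of "ratio_set A" n \<mu> \<xi>])
           (use R eq' cTm rt2 xi mu n3 nz nzc in auto)
    qed
  qed
  show ?thesis using part1 part2 T2 unfolding T_def by simp
qed


end
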